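(* Let $\beta\in\mathbb{C}$ be a root of $X^4+2$ and $K=\mathbb{Q}(\beta)$ with ring of integers $\mathcal{O}_K$. For every $d\in\mathbb{Z}$, every prime ideal of $\mathcal{O}_K$ dividing $d-\beta$ has residue degree $1$. *)

theory Defs
  imports Complex_Main "HOL-Computational_Algebra.Polynomial"
begin

definition algebraic_int :: "complex \<Rightarrow> bool" where
  "algebraic_int x \<longleftrightarrow>
     (\<exists>p :: int poly. lead_coeff p = 1 \<and> poly (map_poly of_int p) x = 0)"

text \<open>The number field Q(beta) inside C, for beta a root of X^4 + 2 (degree 4,
  so Q(beta) is the Q-span of 1, beta, beta^2, beta^3).\<close>
definition QF :: "complex \<Rightarrow> complex set" where
  "QF \<beta> = {of_rat a0 + of_rat a1 * \<beta> + of_rat a2 * \<beta>^2 + of_rat a3 * \<beta>^3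
             | a0 a1 a2 a3. True}"

definition OK :: "complex \<Rightarrow> complex set" where
  "OK \<beta> = {x \<in> QF \<beta>. algebraic_int x}"

definition is_ideal :: "complex set \<Rightarrow> complex set \<Rightarrow> bool" where
  "is_ideal R I \<longleftrightarrow> I \<subseteq> R \<and> 0 \<in> I \<and>
     (\<forall>x\<in>I. \<forall>y\<in>I. x + y \<in> I) \<and> (\<forall>x\<in>I. - x \<in> I) \<and>
     (\<forall>r\<in>R. \<forall>x\<in>I. r * x \<in> I)"

definition is_prime_ideal :: "complex set \<Rightarrow> complex set \<Rightarrow> bool" where
  "is_prime_ideal R P \<longleftrightarrow> is_ideal R P \<and> P \<noteq> R \<and>
     (\<forall>x\<in>R. \<forall>y\<in>R. x * y \<in> P \<longrightarrow> x \<in> P \<or> y \<in> P)"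

definition quot_classes :: "complex set \<Rightarrow> complex set \<Rightarrow> complex set set" where
  "quot_classes R P = (\<lambda>x. (\<lambda>y. x + y) ` P) ` R"

definition prime_below :: "complex set \<Rightarrow> nat" where
  "prime_below P = (THE p. prime p \<and> of_nat p \<in> P)"

definition residue_degree :: "complex set \<Rightarrow> complex set \<Rightarrow> nat" where
  "residue_degree R P = (THE f. card (quot_classes R P) = prime_below P ^ f)"

end

theory Submission
  imports Defs
begin

lemma rat_sq_ne_2: "(r::rat)^2 \<noteq> 2"
proof
  assume h: "r^2 = 2"
  obtain a b where q: "quotient_of r = (a,b)" by (cases "quotient_of r") auto
  have b0: "b > 0" using quotient_of_denom_pos[OF q] .
  have cop: "coprime a b" using quotient_of_coprime[OF q] .
  have r: "r = of_int a / of_int b" using quotient_of_div[OF q] .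
  have "of_int a ^ 2 = (2::rat) * of_int b ^ 2" using h b0 by (simp add: r power_divide field_simps)
  hence e: "a^2 = 2 * b^2" by (metis of_int_eq_iff of_int_mult of_int_numeral of_int_power)
  hence "even (a^2)" by simp
  hence ea: "even a" by simp
  then obtain k where "a = 2*k" by blast
  with e have "b^2 = 2*k^2" by (simp add: power_mult_distrib)
  hence "even b" by (metis dvd_triv_left even_power zero_less_numeral)
  with ea cop show False by (metis coprime_common_divisor odd_one)
qed

lemma s_indep:
  fixes s :: complex
  assumes "s^2 = -2" "of_rat r1 + of_rat r2 * s = 0"
  shows "r1 = 0 \<and> r2 = 0"
proof (cases "r2 = 0")
  case True thus ?thesis using assms by simp
next
  case False
  define t where "t = - r1 / r2"
  have "s = of_rat t" using assms(2) False unfolding t_def by (simp add: of_rat_divide of_rat_minus field_simps eq_neg_iff_add_eq_0 add.commute)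
  hence "(of_rat (t^2) :: complex) = of_rat (-2)" using assms(1) by (simp add: of_rat_power)
  hence "t^2 = -2" using of_rat_eq_iff by blast
  moreover have "t^2 \<ge> 0" by simp
  ultimately show ?thesis by simp
qed

lemma lin_indep:
  fixes b :: complex
  assumes b4: "b^4 + 2 = 0"
    and h: "of_rat a0 + of_rat a1 * b + of_rat a2 * b^2 + of_rat a3 * b^3 = 0"
  shows "a0 = 0 \<and> a1 = 0 \<and> a2 = 0 \<and> a3 = 0"
proof -
  define s where "s = b^2"
  have s2: "s^2 = -2" using b4 unfolding s_def by algebra
  have e1: "b * (of_rat a1 + of_rat a3 * s) = - (of_rat a0 + of_rat a2 * s)"
    using h unfolding s_def by algebra
  show ?thesis
  proof (cases "a1 = 0 \<and> a3 = 0")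
    case True
    hence "of_rat a0 + of_rat a2 * s = 0" using e1 by (simp add: neg_eq_iff_add_eq_0 add.commute)
    with s_indep[OF s2] True show ?thesis by blast
  next
    case False
    define D where "D = a1^2 + 2*a3^2"
    have Dpos: "D > 0" unfolding D_def using False
      by (cases "a1 = 0") (auto intro: add_pos_nonneg add_nonneg_pos)
    define r1 where "r1 = -(a0*a1 + 2*a2*a3)/D"
    define r2 where "r2 = -(a1*a2 - a0*a3)/D"
    have r1D: "r1 * D = -(a0*a1 + 2*a2*a3)" using Dpos unfolding r1_def by simp
    have r2D: "r2 * D = -(a1*a2 - a0*a3)" using Dpos unfolding r2_def by simp
    have "b * of_rat D = b * (of_rat a1 + of_rat a3 * s) * (of_rat a1 - of_rat a3 * s)"
      unfolding D_def using s2 by (simp add: of_rat_add of_rat_mult of_rat_power) algebra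
    also have "\<dots> = - (of_rat a0 + of_rat a2 * s) * (of_rat a1 - of_rat a3 * s)" using e1 by simp
    also have "\<dots> = of_rat (r1 * D) + of_rat (r2 * D) * s"
      using s2 unfolding r1D r2D by (simp add: of_rat_add of_rat_mult of_rat_minus of_rat_diff) algebra
    finally have "b * of_rat D = (of_rat r1 + of_rat r2 * s) * of_rat D" by (simp add: of_rat_mult algebra_simps)
    hence bb: "b = of_rat r1 + of_rat r2 * s" using Dpos by simp
    have "of_rat (r1^2 - 2*r2^2) + of_rat (2*r1*r2 - 1) * s = (of_rat r1 + of_rat r2 * s)^2 - s"
      using s2 by (simp add: of_rat_add of_rat_mult of_rat_diff of_rat_power) algebra
    also have "\<dots> = 0" using bb s_def by simp
    finally have "r1^2 - 2*r2^2 = 0 \<and> 2*r1*r2 - 1 = 0" using s_indep[OF s2] by blast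
    hence "r2 \<noteq> 0" "r1^2 = 2*r2^2" by auto
    hence "(r1/r2)^2 = 2" by (simp add: power_divide)
    with rat_sq_ne_2 show ?thesis by blast
  qed
qed



lemma lin_indep_int:
  fixes b :: complex
  assumes b4: "b^4 + 2 = 0"
    and h: "of_int a0 + of_int a1 * b + of_int a2 * b^2 + of_int a3 * b^3 = of_int c0 + of_int c1 * b + of_int c2 * b^2 + of_int c3 * b^3"
  shows "a0 = c0 \<and> a1 = c1 \<and> a2 = c2 \<and> a3 = c3"
proof -
  have "of_rat (of_int (a0 - c0)) + of_rat (of_int (a1 - c1)) * b + of_rat (of_int (a2 - c2)) * b^2 + of_rat (of_int (a3 - c3)) * b^3 = 0"
    using h by (simp add: of_rat_diff of_rat_of_int_eq algebra_simps)
  from lin_indep[OF b4 this] show ?thesis by simp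
qed

definition ZB :: "complex \<Rightarrow> complex set" where
  "ZB b = {of_int a0 + of_int a1 * b + of_int a2 * b^2 + of_int a3 * b^3 | a0 a1 a2 a3. True}"

lemma ZBI: "of_int a0 + of_int a1 * b + of_int a2 * b^2 + of_int a3 * b^3 \<in> ZB b"
  unfolding ZB_def by blast

lemma ZBE: assumes "z \<in> ZB b"
  obtains a0 a1 a2 a3 where "z = of_int a0 + of_int a1 * b + of_int a2 * b^2 + of_int a3 * b^3"
  using assms unfolding ZB_def by blast

lemma ZB_of_int: "of_int k \<in> ZB b"
  using ZBI[of k 0 b 0 0] by simp

lemma ZB_0: "0 \<in> ZB b" using ZB_of_int[of 0] by simp
lemma ZB_1: "1 \<in> ZB b" using ZB_of_int[of 1] by simp

lemma ZB_b: "b \<in> ZB b"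
  using ZBI[of 0 1 b 0 0] by simp

lemma ZB_add: "x \<in> ZB b \<Longrightarrow> y \<in> ZB b \<Longrightarrow> x + y \<in> ZB b"
proof -
  assume "x \<in> ZB b" "y \<in> ZB b"
  then obtain a0 a1 a2 a3 c0 c1 c2 c3 where
    "x = of_int a0 + of_int a1 * b + of_int a2 * b^2 + of_int a3 * b^3"
    "y = of_int c0 + of_int c1 * b + of_int c2 * b^2 + of_int c3 * b^3" by (metis ZBE)
  hence "x + y = of_int (a0+c0) + of_int (a1+c1) * b + of_int (a2+c2) * b^2 + of_int (a3+c3) * b^3"
    by (simp add: algebra_simps)
  thus ?thesis by (metis ZBI)
qed

lemma ZB_uminus: "x \<in> ZB b \<Longrightarrow> - x \<in> ZB b"
proof -
  assume "x \<in> ZB b"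
  then obtain a0 a1 a2 a3 where
    "x = of_int a0 + of_int a1 * b + of_int a2 * b^2 + of_int a3 * b^3" by (metis ZBE)
  hence "- x = of_int (-a0) + of_int (-a1) * b + of_int (-a2) * b^2 + of_int (-a3) * b^3"
    by (simp add: algebra_simps)
  thus ?thesis by (metis ZBI)
qed

lemma ZB_diff: "x \<in> ZB b \<Longrightarrow> y \<in> ZB b \<Longrightarrow> x - y \<in> ZB b"
  using ZB_add[of x b "-y"] ZB_uminus[of y b] by simp

lemma mult_formula: fixes b :: complex assumes b4: "b^4 + 2 = 0" shows
 "(a0 + a1 * b + a2 * b^2 + a3 * b^3) * (c0 + c1 * b + c2 * b^2 + c3 * b^3) = (a0*c0 - 2*(a1*c3 + a2*c2 + a3*c1)) + (a0*c1 + a1*c0 - 2*(a2*c3 + a3*c2)) * b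
     + (a0*c2 + a1*c1 + a2*c0 - 2*a3*c3) * b^2 + (a0*c3 + a1*c2 + a2*c1 + a3*c0) * b^3"
  using b4 by algebra

lemma charpoly_formula1: fixes b :: complex assumes b4: "b^4 + 2 = 0" shows
 "(z::complex) = c0 + c1 * b + c2 * b^2 + c3 * b^3 \<Longrightarrow> (z^2 + (-2*c0) * z + (c0^2 - 2*c2^2 + 4*c1*c3)) + b^2 * ((-2*c2) * z + (2*c0*c2 - c1^2 + 2*c3^2)) = 0"
  using b4 by algebra

lemma charpoly_formula2: "(z::complex)^4 + (2*a) * z^3 + (a^2 + 2*bb + 2*u^2) * z^2 + (2*a*bb + 4*u*v) * z + (bb^2 + 2*v^2) = (z^2 + a * z + bb)^2 + 2 * (u * z + v)^2"
  by algebra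

lemma ZB_mult: assumes b4: "b^4 + 2 = 0" shows "x \<in> ZB b \<Longrightarrow> y \<in> ZB b \<Longrightarrow> x * y \<in> ZB b"
proof -
  assume "x \<in> ZB b" "y \<in> ZB b"
  then obtain a0 a1 a2 a3 c0 c1 c2 c3 where
    x: "x = of_int a0 + of_int a1 * b + of_int a2 * b^2 + of_int a3 * b^3" and
    y: "y = of_int c0 + of_int c1 * b + of_int c2 * b^2 + of_int c3 * b^3" by (metis ZBE)
  have "x * y = of_int (a0*c0 - 2*(a1*c3 + a2*c2 + a3*c1)) + of_int (a0*c1 + a1*c0 - 2*(a2*c3 + a3*c2)) * b
     + of_int (a0*c2 + a1*c1 + a2*c0 - 2*a3*c3) * b^2 + of_int (a0*c3 + a1*c2 + a2*c1 + a3*c0) * b^3"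
    unfolding x y mult_formula[OF b4] by simp
  thus ?thesis by (metis ZBI)
qed

lemma ZB_pow: assumes b4: "b^4 + 2 = 0" shows "x \<in> ZB b \<Longrightarrow> x ^ n \<in> ZB b"
  by (induction n) (auto simp: ZB_1 ZB_mult[OF b4])

lemma ZB_sum: "(\<And>i. i \<in> A \<Longrightarrow> f i \<in> ZB b) \<Longrightarrow> sum f A \<in> ZB b"
  by (induction A rule: infinite_finite_induct) (auto simp: ZB_0 ZB_add)

lemma ZB_QF: "x \<in> ZB b \<Longrightarrow> x \<in> QF b"
proof -
  assume "x \<in> ZB b"
  then obtain a0 a1 a2 a3 where "x = of_int a0 + of_int a1 * b + of_int a2 * b^2 + of_int a3 * b^3" by (metis ZBE)
  hence "x = of_rat (of_int a0) + of_rat (of_int a1) * b + of_rat (of_int a2) * b^2 + of_rat (of_int a3) * b^3"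
    by (simp only: of_rat_of_int_eq)
  thus ?thesis unfolding QF_def by blast
qed

lemma ZB_algint: assumes b4: "b^4 + 2 = 0" and "z \<in> ZB b" shows "algebraic_int z"
proof -
  obtain c0 c1 c2 c3 where z: "z = of_int c0 + of_int c1 * b + of_int c2 * b^2 + of_int c3 * b^3"
    using assms(2) by (metis ZBE)
  define a where "a = -2*c0"
  define bb where "bb = c0^2 - 2*c2^2 + 4*c1*c3"
  define u where "u = -2*c2"
  define v where "v = 2*c0*c2 - c1^2 + 2*c3^2"
  define P1 where "P1 = z^2 + of_int a * z + of_int bb"
  define P2 where "P2 = of_int u * z + of_int v"
  have s2: "(b^2)^2 = -2" using b4 by algebra
  have "P1 + b^2 * P2 = 0"
    using charpoly_formula1[OF b4 z] unfolding P1_def P2_def a_def bb_def u_def v_def by simp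
  hence "P1 = - (b^2 * P2)" by (simp add: eq_neg_iff_add_eq_0)
  hence "P1^2 = (b^2)^2 * P2^2" by (simp add: power_mult_distrib)
  hence E: "P1^2 + 2 * P2^2 = 0" using s2 by simp
  define p :: "int poly" where "p = [: bb^2 + 2*v^2, 2*a*bb + 4*u*v, a^2 + 2*bb + 2*u^2, 2*a, 1 :]"
  have lc: "lead_coeff p = 1" unfolding p_def by simp
  have "poly (map_poly of_int p) z = P1^2 + 2 * P2^2"
    unfolding p_def P1_def P2_def charpoly_formula2[symmetric] by (simp add: map_poly_pCons algebra_simps power2_eq_square power3_eq_cube power4_eq_xxxx)
  with E have "poly (map_poly of_int p) z = 0" by simp
  thus ?thesis unfolding algebraic_int_def using lc by blast
qed

lemma ZB_OK: assumes b4: "b^4 + 2 = 0" and "z \<in> ZB b" shows "z \<in> OK b"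
  unfolding OK_def using ZB_QF[OF assms(2)] ZB_algint[OF assms] by blast



definition MZ :: "complex \<Rightarrow> int \<Rightarrow> complex set" where
  "MZ b q = {of_int q * z | z. z \<in> ZB b}"

lemma MZ_ZB: assumes b4: "b^4 + 2 = 0" shows "x \<in> MZ b q \<Longrightarrow> x \<in> ZB b"
  unfolding MZ_def using ZB_mult[OF b4] ZB_of_int by blast

lemma MZ_mult: assumes b4: "b^4 + 2 = 0" shows "x \<in> MZ b q \<Longrightarrow> y \<in> ZB b \<Longrightarrow> x * y \<in> MZ b q"
proof -
  assume "x \<in> MZ b q" "y \<in> ZB b"
  then obtain z where "z \<in> ZB b" "x = of_int q * z" unfolding MZ_def by blast
  hence "x * y = of_int q * (z * y)" "z * y \<in> ZB b" using ZB_mult[OF b4] \<open>y \<in> ZB b\<close> by auto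
  thus ?thesis unfolding MZ_def by blast
qed

lemma MZ_add: "x \<in> MZ b q \<Longrightarrow> y \<in> MZ b q \<Longrightarrow> x + y \<in> MZ b q"
proof -
  assume "x \<in> MZ b q" "y \<in> MZ b q"
  then obtain z z' where "z \<in> ZB b" "x = of_int q * z" "z' \<in> ZB b" "y = of_int q * z'" unfolding MZ_def by blast
  hence "x + y = of_int q * (z + z')" "z + z' \<in> ZB b" using ZB_add by (auto simp: algebra_simps)
  thus ?thesis unfolding MZ_def by blast
qed

lemma MZ_0: "0 \<in> MZ b q" unfolding MZ_def using ZB_0 by force

lemma MZ_sum: "(\<And>i. i \<in> A \<Longrightarrow> f i \<in> MZ b q) \<Longrightarrow> sum f A \<in> MZ b q"
  by (induction A rule: infinite_finite_induct) (auto simp: MZ_0 MZ_add)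

lemma odd_prime_dvd2: assumes "prime (q::int)" "odd q" "q dvd 2 * x" shows "q dvd x"
proof -
  have "\<not> q dvd 2"
  proof
    assume "q dvd 2"
    hence "q \<le> 2" by (simp add: zdvd_imp_le)
    moreover have "q \<ge> 2" using assms(1) by (simp add: prime_ge_2_int)
    ultimately have "q = 2" by simp
    with assms(2) show False by simp
  qed
  thus ?thesis using assms prime_dvd_mult_iff by blast
qed

lemma R_red: assumes "prime (q::int)" "odd q" "q dvd a^2 - 2*c^2" "q dvd a*c"
  shows "q dvd a \<and> q dvd c"
proof -
  have "q dvd a \<or> q dvd c" using assms(1,4) prime_dvd_mult_iff by blast
  thus ?thesis
  proof
    assume h: "q dvd a"
    hence "q dvd a^2" by (metis dvd_mult2 power2_eq_square)
    have "2*c^2 = a^2 - (a^2 - 2*c^2)" by simp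
    hence "q dvd 2*c^2" using assms(3) \<open>q dvd a^2\<close> by (metis dvd_diff)
    hence "q dvd c^2" using odd_prime_dvd2 assms by blast
    thus ?thesis using h prime_dvd_power[OF assms(1)] by blast
  next
    assume h: "q dvd c"
    hence "q dvd 2*c^2" by (simp add: power2_eq_square)
    have "a^2 = (a^2 - 2*c^2) + 2*c^2" by simp
    hence "q dvd a^2" using assms(3) \<open>q dvd 2*c^2\<close> by (metis dvd_add)
    thus ?thesis using h prime_dvd_power[OF assms(1)] by blast
  qed
qed

lemma red_core:
  fixes c0 c1 c2 c3 :: int
  assumes q: "prime q" "odd q"
    and E0: "q dvd c0*c0 - 2*(c1*c3 + c2*c2 + c3*c1)"
    and E1: "q dvd c0*c1 + c1*c0 - 2*(c2*c3 + c3*c2)"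
    and E2: "q dvd c0*c2 + c1*c1 + c2*c0 - 2*c3*c3"
    and E3: "q dvd c0*c3 + c1*c2 + c2*c1 + c3*c0"
  shows "q dvd c0 \<and> q dvd c1 \<and> q dvd c2 \<and> q dvd c3"
proof -
  define e0 where "e0 = c0*c0 - 2*(c1*c3 + c2*c2 + c3*c1)"
  define e2 where "e2 = c0*c2 + c1*c1 + c2*c0 - 2*c3*c3"
  define e1 where "e1 = c0*c1 - 2*c2*c3"
  define e3 where "e3 = c0*c3 + c1*c2"
  have d0: "q dvd e0" using E0 e0_def by simp
  have d2: "q dvd e2" using E2 e2_def by simp
  have "q dvd 2*e1" using E1 unfolding e1_def by (simp add: algebra_simps)
  hence d1: "q dvd e1" using odd_prime_dvd2 q by blast
  have "q dvd 2*e3" using E3 unfolding e3_def by (simp add: algebra_simps)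
  hence d3: "q dvd e3" using odd_prime_dvd2 q by blast
  define X0 where "X0 = c0^3 - 6*c0*c2^2"
  define X1 where "X1 = 3*c0^2*c2 - 2*c2^3"
  have "X0 = c0*e0 - 2*c2*e2 + 2*c3*e1 + 2*c1*e3"
    unfolding X0_def e0_def e1_def e2_def e3_def by algebra
  hence dX0: "q dvd X0" using d0 d1 d2 d3 by (simp only: dvd_add dvd_diff dvd_mult)
  have "X1 = c0*e2 + c2*e0 - c1*e1 + 2*c3*e3"
    unfolding X1_def e0_def e1_def e2_def e3_def by algebra
  hence dX1: "q dvd X1" using d0 d1 d2 d3 by (simp only: dvd_add dvd_diff dvd_mult)
  define a where "a = c0^2 - 2*c2^2"
  define cc where "cc = c0*c2"
  have "a^2 - 2*(2*cc)^2 = c0*X0 - 2*c2*X1"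
    unfolding a_def cc_def X0_def X1_def by algebra
  hence y0: "q dvd a^2 - 2*(2*cc)^2" using dX0 dX1 by simp
  have "2*(a*(2*cc)) = c0*X1 + c2*X0"
    unfolding a_def cc_def X0_def X1_def by algebra
  hence "q dvd 2*(a*(2*cc))" using dX0 dX1 by simp
  hence "q dvd a*(2*cc)" using odd_prime_dvd2 q by blast
  from R_red[of q a "2*cc", OF q y0 this] have "q dvd a" "q dvd 2*cc" by auto
  have ha: "q dvd c0^2 - 2*c2^2" using \<open>q dvd a\<close> unfolding a_def .
  have "q dvd 2*(c0*c2)" using \<open>q dvd 2*cc\<close> unfolding cc_def .
  hence "q dvd c0*c2" by (rule odd_prime_dvd2[OF q])
  from R_red[of q "c0" "c2", OF q ha this] have h02: "q dvd c0" "q dvd c2" by auto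
  have e4: "2*(2*(c1*c3)) = (c0^2 - 2*c2^2) - e0" unfolding e0_def by algebra
  have "q dvd (c0^2 - 2*c2^2) - e0" by (rule dvd_diff[OF ha d0])
  hence "q dvd 2*(2*(c1*c3))" unfolding e4 .
  hence h13: "q dvd c1*c3" using odd_prime_dvd2[OF q] by blast
  have e5: "c1^2 - 2*c3^2 = e2 - 2*(c0*c2)" unfolding e2_def by algebra
  have "q dvd e2 - 2*(c0*c2)" using d2 h02(1) by (simp add: dvd_diff)
  hence "q dvd c1^2 - 2*c3^2" unfolding e5 .
  from R_red[of q c1 c3, OF q this h13] h02 show ?thesis by auto
qed



lemma sq_red:
  assumes b4: "b^4 + 2 = 0" and q: "prime q" "odd q" and w: "w \<in> ZB b" and w2: "w^2 \<in> MZ b q"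
  shows "w \<in> MZ b q"
proof -
  obtain c0 c1 c2 c3 where wc: "w = of_int c0 + of_int c1 * b + of_int c2 * b^2 + of_int c3 * b^3"
    using w by (metis ZBE)
  obtain z where z: "z \<in> ZB b" "w^2 = of_int q * z" using w2 unfolding MZ_def by blast
  obtain d0 d1 d2 d3 where zd: "z = of_int d0 + of_int d1 * b + of_int d2 * b^2 + of_int d3 * b^3"
    using z(1) by (metis ZBE)
  have "w^2 = w * w" by (rule power2_eq_square)
  also have "w * w = of_int (c0*c0 - 2*(c1*c3 + c2*c2 + c3*c1)) + of_int (c0*c1 + c1*c0 - 2*(c2*c3 + c3*c2)) * b
     + of_int (c0*c2 + c1*c1 + c2*c0 - 2*c3*c3) * b^2 + of_int (c0*c3 + c1*c2 + c2*c1 + c3*c0) * b^3"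
    unfolding wc mult_formula[OF b4] by simp
  finally have "w^2 = of_int (c0*c0 - 2*(c1*c3 + c2*c2 + c3*c1)) + of_int (c0*c1 + c1*c0 - 2*(c2*c3 + c3*c2)) * b
     + of_int (c0*c2 + c1*c1 + c2*c0 - 2*c3*c3) * b^2 + of_int (c0*c3 + c1*c2 + c2*c1 + c3*c0) * b^3" .
  moreover have "w^2 = of_int (q*d0) + of_int (q*d1) * b + of_int (q*d2) * b^2 + of_int (q*d3) * b^3"
    unfolding z(2) zd by (simp add: algebra_simps)
  ultimately have "c0*c0 - 2*(c1*c3 + c2*c2 + c3*c1) = q*d0 \<and> c0*c1 + c1*c0 - 2*(c2*c3 + c3*c2) = q*d1 \<and>
     c0*c2 + c1*c1 + c2*c0 - 2*c3*c3 = q*d2 \<and> c0*c3 + c1*c2 + c2*c1 + c3*c0 = q*d3"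
    using lin_indep_int[OF b4] by metis
  hence "q dvd c0 \<and> q dvd c1 \<and> q dvd c2 \<and> q dvd c3"
    by (intro red_core[OF q]) (auto simp: dvd_def)
  then obtain k0 k1 k2 k3 where "c0 = q*k0" "c1 = q*k1" "c2 = q*k2" "c3 = q*k3" by (auto simp: dvd_def)
  hence "w = of_int q * (of_int k0 + of_int k1 * b + of_int k2 * b^2 + of_int k3 * b^3)"
    unfolding wc by (simp add: algebra_simps)
  thus ?thesis unfolding MZ_def using ZBI by blast
qed

lemma pow_red:
  assumes b4: "b^4 + 2 = 0" and q: "prime q" "odd q"
  shows "w \<in> ZB b \<Longrightarrow> n \<ge> 1 \<Longrightarrow> w^n \<in> MZ b q \<Longrightarrow> w \<in> MZ b q"
proof (induction n arbitrary: w rule: less_induct)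
  case (less n)
  show ?case
  proof (cases "n = 1")
    case True thus ?thesis using less by simp
  next
    case False
    define m where "m = (n+1) div 2"
    have m: "m < n" "m \<ge> 1" "2*m \<ge> n" using False less.prems(2) unfolding m_def by auto
    have "(w^m)^2 = w^n * w^(2*m - n)"
      using m by (simp add: power_mult[symmetric] power_add[symmetric] mult.commute)
    also have "\<dots> \<in> MZ b q" using MZ_mult[OF b4 less.prems(3)] ZB_pow[OF b4 less.prems(1)] by blast
    finally have "w^m \<in> MZ b q" using sq_red[OF b4 q ZB_pow[OF b4 less.prems(1)]] by blast
    thus ?thesis using less.IH[OF m(1) less.prems(1) m(2)] by blast
  qed
qed

lemma odd_case:
  assumes b4: "b^4 + 2 = 0" and p: "prime (p::nat)" "odd p" and w: "w \<in> ZB b" and n: "n \<ge> 1"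
    and eq: "w^n = (\<Sum>k<n. of_int (g k) * of_nat p ^ (n-k) * w^k)"
  shows "w \<in> MZ b (int p)"
proof -
  have qp: "prime (int p)" "odd (int p)" using p by auto
  have "w^n \<in> MZ b (int p)"
    unfolding eq
  proof (rule MZ_sum)
    fix k assume "k \<in> {..<n}"
    hence k: "n - k = Suc (n - k - 1)" by simp
    have "of_int (g k) * of_nat p ^ (n-k) * w^k = of_int (int p) * (of_int (g k * int p ^ (n-k-1)) * w^k)"
      by (subst k) (simp add: algebra_simps)
    moreover have "of_int (g k * int p ^ (n-k-1)) * w^k \<in> ZB b"
      using ZB_mult[OF b4 ZB_of_int ZB_pow[OF b4 w]] by blast
    ultimately show "of_int (g k) * of_nat p ^ (n-k) * w^k \<in> MZ b (int p)" unfolding MZ_def by blast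
  qed
  thus ?thesis using pow_red[OF b4 qp w n] by blast
qed



definition BZ :: "complex \<Rightarrow> complex set" where
  "BZ b = {b * z | z. z \<in> ZB b}"

lemma BZ_add: "x \<in> BZ b \<Longrightarrow> y \<in> BZ b \<Longrightarrow> x + y \<in> BZ b"
proof -
  assume "x \<in> BZ b" "y \<in> BZ b"
  then obtain z z' where "z \<in> ZB b" "x = b * z" "z' \<in> ZB b" "y = b * z'" unfolding BZ_def by blast
  hence "x + y = b * (z + z')" "z + z' \<in> ZB b" using ZB_add by (auto simp: algebra_simps)
  thus ?thesis unfolding BZ_def by blast
qed

lemma BZ_uminus: "x \<in> BZ b \<Longrightarrow> - x \<in> BZ b"
proof -
  assume "x \<in> BZ b"
  then obtain z where "z \<in> ZB b" "x = b * z" unfolding BZ_def by blast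
  hence "- x = b * (- z)" "- z \<in> ZB b" using ZB_uminus by auto
  thus ?thesis unfolding BZ_def by blast
qed

lemma BZ_diff: "x \<in> BZ b \<Longrightarrow> y \<in> BZ b \<Longrightarrow> x - y \<in> BZ b"
  using BZ_add[of x b "-y"] BZ_uminus[of y b] by simp

lemma BZ_mult: assumes b4: "b^4 + 2 = 0" shows "x \<in> BZ b \<Longrightarrow> y \<in> ZB b \<Longrightarrow> x * y \<in> BZ b"
proof -
  assume "x \<in> BZ b" "y \<in> ZB b"
  then obtain z where "z \<in> ZB b" "x = b * z" unfolding BZ_def by blast
  hence "x * y = b * (z * y)" "z * y \<in> ZB b" using ZB_mult[OF b4] \<open>y \<in> ZB b\<close> by auto
  thus ?thesis unfolding BZ_def by blast
qed

lemma BZ_I: "z \<in> ZB b \<Longrightarrow> b * z \<in> BZ b" unfolding BZ_def by blast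

lemma BZ_even: assumes b4: "b^4 + 2 = 0" shows "of_int (2*k) \<in> BZ b"
proof -
  have "of_int (2*k) = b * (of_int 0 + of_int 0 * b + of_int 0 * b^2 + of_int (-k) * b^3)"
    using b4 by simp algebra
  thus ?thesis using BZ_I ZBI by metis
qed

lemma BZ_odd: assumes b4: "b^4 + 2 = 0" and "odd c" shows "of_int c - 1 \<in> BZ b"
proof -
  obtain k where "c - 1 = 2 * k" using assms(2) by (metis oddE add_diff_cancel_right')
  hence "of_int c - 1 = (of_int (2*k) :: complex)" by (metis of_int_1 of_int_diff)
  thus ?thesis using BZ_even[OF b4] by simp
qed

lemma one_notin_BZ: assumes b4: "b^4 + 2 = 0" shows "1 \<notin> BZ b"
proof
  assume "1 \<in> BZ b"
  then obtain z where "z \<in> ZB b" "1 = b * z" unfolding BZ_def by blast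
  then obtain d0 d1 d2 d3 where "1 = b * (of_int d0 + of_int d1 * b + of_int d2 * b^2 + of_int d3 * b^3)"
    by (metis ZBE)
  also have "\<dots> = of_int (-2*d3) + of_int d0 * b + of_int d1 * b^2 + of_int d2 * b^3"
    using b4 by simp algebra
  finally have "of_int 1 + of_int 0 * b + of_int 0 * b^2 + of_int 0 * b^3 = \<dots>" by simp
  from lin_indep_int[OF b4 this] have "1 = -2*d3" by simp
  thus False by presburger
qed

lemma U_pow: assumes b4: "b^4 + 2 = 0" and u: "u \<in> ZB b" "u - 1 \<in> BZ b" shows "u^n - 1 \<in> BZ b"
proof (induction n)
  case 0 show ?case using BZ_I[OF ZB_0, of b] by simp
next
  case (Suc n)
  have e: "u^Suc n - 1 = (u - 1) * u^n + (u^n - 1)" by (simp add: algebra_simps)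
  have m: "(u - 1) * u^n + (u^n - 1) \<in> BZ b" using BZ_add[OF BZ_mult[OF b4 u(2) ZB_pow[OF b4 u(1)]] Suc] .
  show ?case by (subst e) (rule m)
qed

lemma decomp:
  assumes b4: "b^4 + 2 = 0" and w: "w \<in> ZB b" and nw: "w \<notin> MZ b 2"
  shows "\<exists>j\<le>3. \<exists>u. u \<in> ZB b \<and> u - 1 \<in> BZ b \<and> w = b^j * u"
proof -
  obtain c0 c1 c2 c3 where wc: "w = of_int c0 + of_int c1 * b + of_int c2 * b^2 + of_int c3 * b^3"
    using w by (metis ZBE)
  show ?thesis
  proof (cases "odd c0")
    case True
    have "w - 1 = (of_int c0 - 1) + b * (of_int c1 + of_int c2 * b + of_int c3 * b^2 + of_int 0 * b^3)"
      unfolding wc by (simp add: algebra_simps power2_eq_square power3_eq_cube)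
    moreover have "b * (of_int c1 + of_int c2 * b + of_int c3 * b^2 + of_int 0 * b^3) \<in> BZ b"
      using BZ_I ZBI[of c1 c2 b c3 0] by blast
    ultimately have "w - 1 \<in> BZ b" using BZ_add BZ_odd[OF b4 True] by metis
    thus ?thesis using w by (intro exI[of _ 0]) auto
  next
    case F0: False
    then obtain k0 where k0: "c0 = 2*k0" by blast
    show ?thesis
    proof (cases "odd c1")
      case True
      define u where "u = of_int c1 + of_int c2 * b + of_int c3 * b^2 + of_int (-k0) * b^3"
      have "u \<in> ZB b" unfolding u_def using ZBI[of c1 c2 b c3 "-k0"] by simp
      moreover have "w = b^1 * u" unfolding wc u_def k0 using b4 by simp algebra
      moreover have "u - 1 \<in> BZ b"
      proof -
        have e: "u - 1 = (of_int c1 - 1) + b * (of_int c2 + of_int c3 * b + of_int (-k0) * b^2 + of_int 0 * b^3)"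
          unfolding u_def by (simp add: algebra_simps power2_eq_square power3_eq_cube)
        have h: "b * (of_int c2 + of_int c3 * b + of_int (-k0) * b^2 + of_int 0 * b^3) \<in> BZ b"
          using BZ_I ZBI by blast
        show ?thesis by (subst e) (rule BZ_add[OF BZ_odd[OF b4 True] h])
      qed
      moreover have "(1::nat) \<le> 3" by simp
      ultimately show ?thesis by blast
    next
      case F1: False
      then obtain k1 where k1: "c1 = 2*k1" by blast
      show ?thesis
      proof (cases "odd c2")
        case True
        define u where "u = of_int c2 + of_int c3 * b + of_int (-k0) * b^2 + of_int (-k1) * b^3"
        have "u \<in> ZB b" unfolding u_def using ZBI[of c2 c3 b "-k0" "-k1"] by simp
        moreover have "w = b^2 * u" unfolding wc u_def k0 k1 using b4 by simp algebra
        moreover have "u - 1 \<in> BZ b"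
        proof -
          have e: "u - 1 = (of_int c2 - 1) + b * (of_int c3 + of_int (-k0) * b + of_int (-k1) * b^2 + of_int 0 * b^3)"
            unfolding u_def by (simp add: algebra_simps power2_eq_square power3_eq_cube)
          have h: "b * (of_int c3 + of_int (-k0) * b + of_int (-k1) * b^2 + of_int 0 * b^3) \<in> BZ b"
            using BZ_I ZBI by blast
          show ?thesis by (subst e) (rule BZ_add[OF BZ_odd[OF b4 True] h])
        qed
        moreover have "(2::nat) \<le> 3" by simp
        ultimately show ?thesis by blast
      next
        case F2: False
        then obtain k2 where k2: "c2 = 2*k2" by blast
        show ?thesis
        proof (cases "odd c3")
          case True
          define u where "u = of_int c3 + of_int (-k0) * b + of_int (-k1) * b^2 + of_int (-k2) * b^3"
          have "u \<in> ZB b" unfolding u_def using ZBI[of c3 "-k0" b "-k1" "-k2"] by simp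
          moreover have "w = b^3 * u" unfolding wc u_def k0 k1 k2 using b4 by simp algebra
          moreover have "u - 1 \<in> BZ b"
          proof -
            have e: "u - 1 = (of_int c3 - 1) + b * (of_int (-k0) + of_int (-k1) * b + of_int (-k2) * b^2 + of_int 0 * b^3)"
              unfolding u_def by (simp add: algebra_simps power2_eq_square power3_eq_cube)
            have h: "b * (of_int (-k0) + of_int (-k1) * b + of_int (-k2) * b^2 + of_int 0 * b^3) \<in> BZ b"
              using BZ_I ZBI by blast
            show ?thesis by (subst e) (rule BZ_add[OF BZ_odd[OF b4 True] h])
          qed
          moreover have "(3::nat) \<le> 3" by simp
          ultimately show ?thesis by blast
        next
          case False
          then obtain k3 where k3: "c3 = 2*k3" by blast
          have "w = of_int 2 * (of_int k0 + of_int k1 * b + of_int k2 * b^2 + of_int k3 * b^3)"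
            unfolding wc k0 k1 k2 k3 by (simp add: algebra_simps)
          hence "w \<in> MZ b 2" unfolding MZ_def using ZBI by blast
          with nw show ?thesis by blast
        qed
      qed
    qed
  qed
qed



lemma exp_ineq: assumes "(j::nat) \<le> 3" "k < n" shows "j*n+1 + (4*(n-k)+j*k - (j*n+1)) = 4*(n-k) + j*k"
proof -
  define t where "t = n - k"
  have t: "t \<ge> 1" "n = k + t" using assms(2) unfolding t_def by auto
  have "(j+1)*t \<le> 4*t" using assms(1) by (intro mult_right_mono) auto
  hence h: "j*t + t \<le> 4*t" by (simp add: algebra_simps)
  hence "j*t + 1 \<le> 4*t" using t(1) by linarith
  hence "j*n + 1 \<le> 4*(n-k) + j*k" using t unfolding t_def by (simp add: algebra_simps)
  thus ?thesis by simp
qed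

lemma two_case:
  assumes b4: "b^4 + 2 = 0" and w: "w \<in> ZB b" and n: "n \<ge> 1"
    and eq: "w^n = (\<Sum>k<n. of_int (g k) * of_nat 2 ^ (n-k) * w^k)"
  shows "w \<in> MZ b 2"
proof (rule ccontr)
  assume nw: "w \<notin> MZ b 2"
  obtain j u where j: "j \<le> 3" "u \<in> ZB b" "u - 1 \<in> BZ b" "w = b^j * u"
    using decomp[OF b4 w nw] by blast
  have b0: "b \<noteq> 0" using b4 by auto
  define Z where "Z = (\<Sum>k<n. of_int (g k * (-1)^(n-k)) * b^(4*(n-k)+j*k - (j*n+1)) * u^k)"
  have trm: "of_int (g k) * of_nat 2 ^ (n-k) * w^k = b^(j*n+1) * (of_int (g k * (-1)^(n-k)) * b^(4*(n-k)+j*k - (j*n+1)) * u^k)"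
    if k: "k < n" for k
  proof -
    have "b^(4*(n-k)) = (b^4)^(n-k)" by (simp add: power_mult)
    also have "\<dots> = (-1)^(n-k) * 2^(n-k)" using b4 by (simp add: add_eq_0_iff2 power_minus')
    finally have p4: "b^(4*(n-k)) = (-1)^(n-k) * 2^(n-k)" .
    have m1: "((-1::complex)^(n-k)) * (-1)^(n-k) = 1" by (simp add: power_mult_distrib[symmetric])
    have "(2::complex)^(n-k) = (-1)^(n-k) * b^(4*(n-k))" using p4 m1 by (simp add: mult.assoc[symmetric])
    moreover have "b^(j*n+1) * b^(4*(n-k)+j*k - (j*n+1)) = b^(4*(n-k)) * b^(j*k)"
    proof -
      have "b^(j*n+1) * b^(4*(n-k)+j*k - (j*n+1)) = b^(j*n+1 + (4*(n-k)+j*k - (j*n+1)))" by (rule power_add[symmetric])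
      also have "\<dots> = b^(4*(n-k)+j*k)" by (simp only: exp_ineq[OF j(1) k])
      also have "\<dots> = b^(4*(n-k)) * b^(j*k)" by (rule power_add)
      finally show ?thesis .
    qed
    ultimately show ?thesis unfolding j(4)
      by (simp add: power_mult_distrib power_mult algebra_simps)
  qed
  have "w^n = b^(j*n+1) * Z"
    unfolding eq Z_def sum_distrib_left using trm by (intro sum.cong) auto
  moreover have "w^n = b^(j*n) * u^n" unfolding j(4) by (simp add: power_mult_distrib power_mult)
  ultimately have "b^(j*n) * u^n = b^(j*n) * (b * Z)" by simp
  hence un: "u^n = b * Z" using b0 by simp
  have "Z \<in> ZB b" unfolding Z_def
    by (intro ZB_sum ZB_mult[OF b4] ZB_of_int ZB_pow[OF b4] ZB_b j(2))
  hence "u^n \<in> BZ b" unfolding un by (rule BZ_I)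
  moreover have "u^n - 1 \<in> BZ b" using U_pow[OF b4 j(2,3)] .
  ultimately have "u^n - (u^n - 1) \<in> BZ b" by (rule BZ_diff)
  thus False using one_notin_BZ[OF b4] by simp
qed



lemma rat_frac: fixes r :: rat obtains n d :: int where "d > 0" "r = of_int n / of_int d"
proof -
  obtain a c where q: "quotient_of r = (a,c)" by (cases "quotient_of r") auto
  show ?thesis using that[OF quotient_of_denom_pos[OF q] quotient_of_div[OF q]] .
qed

lemma QF_denom: assumes "x \<in> QF b" shows "\<exists>M::nat. M > 0 \<and> of_nat M * x \<in> ZB b"
proof -
  obtain a0 a1 a2 a3 where x: "x = of_rat a0 + of_rat a1 * b + of_rat a2 * b^2 + of_rat a3 * b^3"
    using assms unfolding QF_def by blast
  obtain n0 d0 where 0: "d0 > 0" "a0 = of_int n0 / of_int d0" by (rule rat_frac)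
  obtain n1 d1 where 1: "d1 > 0" "a1 = of_int n1 / of_int d1" by (rule rat_frac)
  obtain n2 d2 where 2: "d2 > 0" "a2 = of_int n2 / of_int d2" by (rule rat_frac)
  obtain n3 d3 where 3: "d3 > 0" "a3 = of_int n3 / of_int d3" by (rule rat_frac)
  define D where "D = d0*d1*d2*d3"
  have Dp: "D > 0" unfolding D_def using 0 1 2 3 by simp
  have r0: "of_int D * a0 = of_int (n0*d1*d2*d3)" unfolding D_def using 0 1 2 3 by (simp add: field_simps)
  have r1: "of_int D * a1 = of_int (n1*d0*d2*d3)" unfolding D_def using 0 1 2 3 by (simp add: field_simps)
  have r2: "of_int D * a2 = of_int (n2*d0*d1*d3)" unfolding D_def using 0 1 2 3 by (simp add: field_simps)
  have r3: "of_int D * a3 = of_int (n3*d0*d1*d2)" unfolding D_def using 0 1 2 3 by (simp add: field_simps)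
  have "of_int D * x = of_rat (of_int D * a0) + of_rat (of_int D * a1) * b + of_rat (of_int D * a2) * b^2 + of_rat (of_int D * a3) * b^3"
    unfolding x by (simp add: of_rat_mult of_rat_of_int_eq algebra_simps)
  also have "\<dots> = of_int (n0*d1*d2*d3) + of_int (n1*d0*d2*d3) * b + of_int (n2*d0*d1*d3) * b^2 + of_int (n3*d0*d1*d2) * b^3"
    unfolding r0 r1 r2 r3 by (simp only: of_rat_of_int_eq)
  finally have "of_int D * x \<in> ZB b" using ZBI by metis
  moreover have "of_nat (nat D) = (of_int D :: complex)" using Dp by simp
  ultimately show ?thesis using Dp by (intro exI[of _ "nat D"]) auto
qed

lemma OK_pint:
  assumes b4: "b^4 + 2 = 0" and x: "x \<in> OK b" and p: "prime (p::nat)"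
  shows "\<exists>m::nat. m > 0 \<and> \<not> p dvd m \<and> of_nat m * x \<in> ZB b"
proof -
  define S where "S = {m::nat. m > 0 \<and> of_nat m * x \<in> ZB b}"
  have ne: "\<exists>m. m \<in> S" using QF_denom[of x b] x unfolding S_def OK_def by auto
  define m where "m = (LEAST m. m \<in> S)"
  have mS: "m \<in> S" unfolding m_def using ne by (metis LeastI_ex)
  have mmin: "\<And>m'. m' \<in> S \<Longrightarrow> m \<le> m'" unfolding m_def by (rule Least_le)
  have "\<not> p dvd m"
  proof
    assume "p dvd m"
    then obtain m' where mm: "m = p * m'" by blast
    have p2: "p \<ge> 2" using p by (simp add: prime_ge_2_nat)
    have m'0: "m' > 0" using mS mm unfolding S_def by (cases "m' = 0") auto
    have m'lt: "m' < m" using mm p2 m'0 by simp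
    define w where "w = of_nat m * x"
    have wZ: "w \<in> ZB b" using mS unfolding S_def w_def by simp
    obtain F :: "int poly" where F: "lead_coeff F = 1" "poly (map_poly of_int F) x = 0"
      using x unfolding OK_def algebraic_int_def by blast
    define n where "n = degree F"
    have dm: "degree (map_poly (of_int :: int \<Rightarrow> complex) F) = n" unfolding n_def by (rule degree_map_poly) simp
    have cm: "\<And>i. coeff (map_poly (of_int :: int \<Rightarrow> complex) F) i = of_int (coeff F i)" by (rule coeff_map_poly) simp
    have s0: "(\<Sum>i\<le>n. of_int (coeff F i) * x^i) = 0" using F(2) unfolding poly_altdef dm cm .
    have n1: "n \<ge> 1"
    proof (rule ccontr)
      assume "\<not> n \<ge> 1"
      hence "n = 0" by simp
      hence "(\<Sum>i\<le>n. of_int (coeff F i) * x^i) = 1" using F(1) unfolding n_def by simp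
      with s0 show False by simp
    qed
    have fn: "coeff F n = 1" using F(1) unfolding n_def .
    have "(\<Sum>i\<le>n. of_int (coeff F i) * of_nat m^(n-i) * w^i) = of_nat m^n * (\<Sum>i\<le>n. of_int (coeff F i) * x^i)"
      unfolding sum_distrib_left w_def
    proof (rule sum.cong)
      fix i assume "i \<in> {..n}"
      hence "n = (n - i) + i" by simp
      hence "(of_nat m :: complex)^n = of_nat m^(n-i) * of_nat m^i" by (metis power_add)
      thus "of_int (coeff F i) * of_nat m^(n-i) * (of_nat m * x)^i = of_nat m^n * (of_int (coeff F i) * x^i)"
        by (simp add: power_mult_distrib)
    qed simp
    also have "\<dots> = 0" using s0 by simp
    finally have "(\<Sum>i\<le>n. of_int (coeff F i) * of_nat m^(n-i) * w^i) = 0" .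
    hence "w^n + (\<Sum>i<n. of_int (coeff F i) * of_nat m^(n-i) * w^i) = 0"
      using fn by (simp add: lessThan_Suc_atMost[symmetric] add.commute)
    hence "w^n = - (\<Sum>i<n. of_int (coeff F i) * of_nat m^(n-i) * w^i)" by (simp add: eq_neg_iff_add_eq_0)
    also have "\<dots> = (\<Sum>i<n. of_int (- coeff F i * int m'^(n-i)) * of_nat p^(n-i) * w^i)"
      unfolding sum_negf[symmetric] mm by (intro sum.cong) (simp_all add: power_mult_distrib)
    finally have eq: "w^n = (\<Sum>i<n. of_int (- coeff F i * int m'^(n-i)) * of_nat p^(n-i) * w^i)" .
    have "w \<in> MZ b (int p)"
    proof (cases "p = 2")
      case True
      show ?thesis using two_case[OF b4 wZ n1, of "\<lambda>i. - coeff F i * int m'^(n-i)"] eq True by simp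
    next
      case False
      hence "odd p" using p prime_odd_nat[OF p] prime_ge_2_nat[OF p] by simp
      thus ?thesis using odd_case[OF b4 p _ wZ n1 eq] by simp
    qed
    then obtain z where z: "z \<in> ZB b" "w = of_int (int p) * z" unfolding MZ_def by blast
    have "of_nat p * (of_nat m' * x) = of_nat p * z" using z(2) unfolding w_def mm by simp
    hence "of_nat m' * x = z" using p2 by simp
    hence "m' \<in> S" using z(1) m'0 unfolding S_def by simp
    with mmin m'lt show False by fastforce
  qed
  thus ?thesis using mS unfolding S_def by blast
qed



theorem proposition4:
  fixes \<beta> :: complex and d :: int and P :: "complex set"
  assumes "\<beta> ^ 4 + 2 = 0"
    and "is_prime_ideal (OK \<beta>) P"
    and "of_int d - \<beta> \<in> P"
  shows "residue_degree (OK \<beta>) P = 1"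
proof -
  note b4 = assms(1)
  define R where "R = OK \<beta>"
  have PR: "P \<subseteq> R" and P0: "0 \<in> P" and Padd: "\<And>x y. x \<in> P \<Longrightarrow> y \<in> P \<Longrightarrow> x + y \<in> P"
    and Pneg: "\<And>x. x \<in> P \<Longrightarrow> - x \<in> P" and Pmul: "\<And>r x. r \<in> R \<Longrightarrow> x \<in> P \<Longrightarrow> r * x \<in> P"
    and Pne: "P \<noteq> R" and Pprime: "\<And>x y. x \<in> R \<Longrightarrow> y \<in> R \<Longrightarrow> x * y \<in> P \<Longrightarrow> x \<in> P \<or> y \<in> P"
    using assms(2) unfolding is_prime_ideal_def is_ideal_def R_def by blast+
  have Pdiff: "\<And>x y. x \<in> P \<Longrightarrow> y \<in> P \<Longrightarrow> x - y \<in> P" using Padd Pneg by (metis diff_conv_add_uminus)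
  have intR: "\<And>k. of_int k \<in> R" unfolding R_def using ZB_OK[OF b4 ZB_of_int] .
  have natR: "\<And>k. of_nat k \<in> R" using intR by (metis of_int_of_nat_eq)
  have one: "1 \<notin> P"
  proof
    assume "1 \<in> P"
    hence "R \<subseteq> P" using Pmul by (metis mult.right_neutral subsetI)
    with PR Pne show False by blast
  qed
  define IP where "IP = {k::int. of_int k \<in> P}"
  have IPmul: "\<And>a k. k \<in> IP \<Longrightarrow> a * k \<in> IP" unfolding IP_def using Pmul intR by simp
  have IPdiff: "\<And>a k. a \<in> IP \<Longrightarrow> k \<in> IP \<Longrightarrow> a - k \<in> IP" unfolding IP_def using Pdiff by simp
  have IPprime: "\<And>a c. a * c \<in> IP \<Longrightarrow> a \<in> IP \<or> c \<in> IP" unfolding IP_def using Pprime intR by simp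
  have one': "1 \<notin> IP" unfolding IP_def using one by simp
  define N where "N = d^4 + 2"
  have Npos: "N > 0" unfolding N_def by (simp add: add_nonneg_pos)
  define \<rho> where "\<rho> = of_int (d^3) + of_int (d^2) * \<beta> + of_int d * \<beta>^2 + of_int 1 * \<beta>^3"
  have "\<rho> \<in> R" unfolding R_def \<rho>_def by (intro ZB_OK[OF b4] ZBI)
  hence "\<rho> * (of_int d - \<beta>) \<in> P" using Pmul assms(3) by blast
  moreover have "\<rho> * (of_int d - \<beta>) = of_int N" unfolding \<rho>_def N_def using b4 by simp algebra
  ultimately have NIP: "N \<in> IP" unfolding IP_def by simp
  define S where "S = {k::nat. k > 0 \<and> int k \<in> IP}"
  have "nat N \<in> S" unfolding S_def using Npos NIP by simp
  hence exS: "\<exists>k. k \<in> S" by blast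
  define p where "p = (LEAST k. k \<in> S)"
  have pS: "p \<in> S" unfolding p_def using exS by (metis LeastI_ex)
  have pmin: "\<And>k. k \<in> S \<Longrightarrow> p \<le> k" unfolding p_def by (rule Least_le)
  have pIP: "int p \<in> IP" and p0: "p > 0" using pS unfolding S_def by auto
  have p1: "p \<noteq> 1" using pIP one' by auto
  have IPchar: "\<And>k. k \<in> IP \<longleftrightarrow> int p dvd k"
  proof
    fix k assume kI: "k \<in> IP"
    have "k - (k div int p) * int p \<in> IP" using IPdiff[OF kI IPmul[OF pIP]] .
    hence "k - int p * (k div int p) \<in> IP" by (simp add: mult.commute)
    hence mI: "k mod int p \<in> IP" by (metis minus_div_mult_eq_mod mult.commute)
    have "k mod int p \<ge> 0" "k mod int p < int p" using p0 by simp_all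
    show "int p dvd k"
    proof (rule ccontr)
      assume "\<not> int p dvd k"
      hence "k mod int p \<noteq> 0" by (simp add: dvd_eq_mod_eq_0)
      hence "nat (k mod int p) \<in> S" unfolding S_def using mI \<open>k mod int p \<ge> 0\<close> by simp
      hence "p \<le> nat (k mod int p)" by (rule pmin)
      hence "int p \<le> k mod int p" using \<open>k mod int p \<ge> 0\<close> by (simp add: le_nat_iff)
      with \<open>k mod int p < int p\<close> show False by simp
    qed
  next
    fix k assume "int p dvd k"
    then obtain t where "k = int p * t" by blast
    thus "k \<in> IP" using IPmul[OF pIP, of t] by (simp add: mult.commute)
  qed
  have pprime: "prime p"
    unfolding prime_nat_iff
  proof (intro conjI allI impI)
    show "1 < p" using p0 p1 by simp
    fix a assume "a dvd p"
    then obtain c where pc: "p = a * c" by blast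
    have a0: "a > 0" "c > 0" using p0 pc by auto
    have "int a * int c \<in> IP" using pIP pc by simp
    hence "int a \<in> IP \<or> int c \<in> IP" by (rule IPprime)
    thus "a = 1 \<or> a = p"
    proof
      assume "int a \<in> IP"
      hence "a \<in> S" using a0 unfolding S_def by simp
      hence "p \<le> a" by (rule pmin)
      moreover have "a \<le> p" using pc a0 by simp
      ultimately show ?thesis by simp
    next
      assume "int c \<in> IP"
      hence "c \<in> S" using a0 unfolding S_def by simp
      hence "p \<le> c" by (rule pmin)
      moreover have "c \<le> p" using pc a0 by simp
      ultimately have "c = p" by simp
      thus ?thesis using pc p0 by simp
    qed
  qed
  have pP: "of_nat p \<in> P" using pIP unfolding IP_def by simp
  have pb: "prime_below P = p"
    unfolding prime_below_def
  proof (rule the_equality)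
    show "prime p \<and> of_nat p \<in> P" using pprime pP by simp
  next
    fix q assume q: "prime q \<and> of_nat q \<in> P"
    hence "int q \<in> IP" unfolding IP_def by simp
    hence "int p dvd int q" using IPchar by blast
    hence "p dvd q" by simp
    thus "q = p" using q p1 prime_nat_iff by blast
  qed
  have cong: "\<exists>k\<in>{0..<p}. x - of_nat k \<in> P" if xR: "x \<in> R" for x
  proof -
    obtain m where m: "m > 0" "\<not> p dvd m" "of_nat m * x \<in> ZB \<beta>"
      using OK_pint[OF b4 xR[unfolded R_def] pprime] by blast
    obtain h0 h1 h2 h3 where w: "of_nat m * x = of_int h0 + of_int h1 * \<beta> + of_int h2 * \<beta>^2 + of_int h3 * \<beta>^3"
      using m(3) by (metis ZBE)
    define hd where "hd = h0 + h1 * d + h2 * d^2 + h3 * d^3"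
    define K where "K = of_int (h1 + h2 * d + h3 * d^2) + of_int (h2 + h3 * d) * \<beta> + of_int h3 * \<beta>^2 + of_int 0 * \<beta>^3"
    have KR: "K \<in> R" unfolding R_def K_def by (intro ZB_OK[OF b4] ZBI)
    have "of_nat m * x - of_int hd = - (K * (of_int d - \<beta>))"
      unfolding w hd_def K_def by simp algebra
    hence wP: "of_nat m * x - of_int hd \<in> P" using Pneg[OF Pmul[OF KR assms(3)]] by simp
    have "coprime (int p) (int m)" using pprime m(2) by (simp add: prime_imp_coprime)
    then obtain s t where st: "s * int p + t * int m = 1" using bezout_int[of "int p" "int m"] by auto
    define c where "c = t * hd"
    have "x - of_int c = of_int s * (x * of_nat p) + of_int t * (of_nat m * x - of_int hd)"
    proof -
      have "x = x * of_int (s * int p + t * int m)" using st by simp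
      thus ?thesis unfolding c_def by (simp add: algebra_simps)
    qed
    moreover have "of_int s * (x * of_nat p) \<in> P" using Pmul[OF intR Pmul[OF xR pP]] .
    moreover have "of_int t * (of_nat m * x - of_int hd) \<in> P" using Pmul[OF intR wP] .
    ultimately have xc: "x - of_int c \<in> P" using Padd by simp
    have "c - c mod int p \<in> IP" using IPchar by (simp add: minus_mod_eq_mult_div)
    hence "of_int (c - c mod int p) \<in> P" unfolding IP_def by simp
    hence "(x - of_int c) + of_int (c - c mod int p) \<in> P" using Padd[OF xc] by blast
    moreover have "(x - of_int c) + of_int (c - c mod int p) = x - (of_int (c mod int p) :: complex)" by simp
    ultimately have "x - of_int (c mod int p) \<in> P" by simp
    moreover have "c mod int p \<ge> 0" "c mod int p < int p" using p0 by simp_all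
    ultimately have "x - of_nat (nat (c mod int p)) \<in> P" "nat (c mod int p) \<in> {0..<p}" by simp_all
    thus ?thesis by blast
  qed
  have coset_eq: "((\<lambda>y. x + y) ` P = (\<lambda>y. x' + y) ` P) \<longleftrightarrow> x - x' \<in> P" for x x'
  proof
    assume h: "(\<lambda>y. x + y) ` P = (\<lambda>y. x' + y) ` P"
    have "x + 0 \<in> (\<lambda>y. x + y) ` P" using P0 by blast
    then obtain y where "y \<in> P" "x = x' + y" using h by auto
    thus "x - x' \<in> P" by simp
  next
    assume h: "x - x' \<in> P"
    have h': "x' - x \<in> P" using Pneg[OF h] by simp
    show "(\<lambda>y. x + y) ` P = (\<lambda>y. x' + y) ` P"
    proof (intro equalityI subsetI)
      fix z assume "z \<in> (\<lambda>y. x + y) ` P"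
      then obtain y where "y \<in> P" "z = x + y" by blast
      thus "z \<in> (\<lambda>y. x' + y) ` P" using Padd[OF h \<open>y \<in> P\<close>] by (intro image_eqI[of _ _ "x - x' + y"]) auto
    next
      fix z assume "z \<in> (\<lambda>y. x' + y) ` P"
      then obtain y where "y \<in> P" "z = x' + y" by blast
      thus "z \<in> (\<lambda>y. x + y) ` P" using Padd[OF h' \<open>y \<in> P\<close>] by (intro image_eqI[of _ _ "x' - x + y"]) auto
    qed
  qed
  have QC: "quot_classes R P = (\<lambda>k. (\<lambda>y. of_nat k + y) ` P) ` {0..<p}"
  proof (intro equalityI subsetI)
    fix C assume "C \<in> quot_classes R P"
    then obtain x where x: "x \<in> R" "C = (\<lambda>y. x + y) ` P" unfolding quot_classes_def by blast
    obtain k where k: "k \<in> {0..<p}" "x - of_nat k \<in> P" using cong[OF x(1)] by blast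
    have "C = (\<lambda>y. of_nat k + y) ` P" using x(2) coset_eq k(2) by blast
    thus "C \<in> (\<lambda>k. (\<lambda>y. of_nat k + y) ` P) ` {0..<p}" using k(1) by blast
  next
    fix C assume "C \<in> (\<lambda>k. (\<lambda>y. of_nat k + y) ` P) ` {0..<p}"
    then obtain k where "C = (\<lambda>y. of_nat k + y) ` P" by blast
    thus "C \<in> quot_classes R P" unfolding quot_classes_def using natR by blast
  qed
  have inj: "inj_on (\<lambda>k. (\<lambda>y. of_nat k + y) ` P) {0..<p}"
  proof (rule inj_onI)
    fix k k' assume k: "k \<in> {0..<p}" "k' \<in> {0..<p}"
      and e: "(\<lambda>y. of_nat k + y) ` P = (\<lambda>y. of_nat k' + y) ` P"
    hence "of_nat k - of_nat k' \<in> P" using coset_eq by blast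
    hence "int k - int k' \<in> IP" unfolding IP_def by simp
    hence "int p dvd int k - int k'" using IPchar by blast
    moreover have "\<bar>int k - int k'\<bar> < int p" using k by auto
    ultimately have "int k - int k' = 0"
    proof (rule_tac ccontr)
      assume d: "int p dvd int k - int k'" and l: "\<bar>int k - int k'\<bar> < int p" and n: "int k - int k' \<noteq> 0"
      from dvd_imp_le_int[OF n d] l show False by simp
    qed
    thus "k = k'" by simp
  qed
  have card: "card (quot_classes R P) = p" unfolding QC using card_image[OF inj] by simp
  show ?thesis
    unfolding residue_degree_def R_def[symmetric] pb card
  proof (rule the_equality)
    show "p = p ^ 1" by simp
  next
    fix f assume "p = p ^ f"
    hence "p ^ f = p ^ 1" by simp
    thus "f = 1" using p0 p1 by (metis power_inject_exp nat_neq_iff less_one)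
  qed
qed


end
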